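(* For $\mu\in[\frac13,1)$ there exists a solution $f_\mu$ of $$(\mu-1)f_\mu(\xi)-\mu\,\xi f_\mu'(\xi)=f_\mu''(\xi),\qquad \xi\ge 0,$$ such that $f_\mu(0)=0$ and $f_\mu(\xi)\to 0$ as $\xi\to\infty$. This solution is positive, and: if $\mu\in(\frac13,1)$ then $f_\mu(\xi)=O(\xi^{1-\frac1\mu})$ as $\xi\to\infty$; for $\mu=\frac13$, $f_{1/3}(\xi)=\xi e^{-\xi^2/6}$. *)

theory Defs
  imports "HOL-Analysis.Analysis"
begin

end

theory Submission
  imports Defs "HOL-Real_Asymp.Real_Asymp"
begin


lemma d1: "0 < s \<Longrightarrow> ((\<lambda>s. s powr a) has_real_derivative a * s powr (a-1)) (at s)"
  by (rule has_real_derivative_powr)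

lemma d2: "s < 1 \<Longrightarrow> ((\<lambda>s. (1-s) powr b) has_real_derivative -(b * (1-s) powr (b-1))) (at s)"
proof -
  assume "s < 1"
  have "((\<lambda>s. (1-s) powr b) has_real_derivative b * (1-s) powr (b - of_nat 1) * (-1)) (at s)"
    by (rule DERIV_fun_powr) (use \<open>s<1\<close> in \<open>auto intro!: derivative_eq_intros\<close>)
  then show ?thesis by simp
qed

lemma powr_int01:
  fixes p :: real assumes "p > -1"
  shows "((\<lambda>s. s powr p) has_integral (1/(p+1))) {0..1}"
proof -
  have "((\<lambda>s. s powr p) has_integral ((\<lambda>s. s powr (p+1) / (p+1)) 1 - (\<lambda>s. s powr (p+1) / (p+1)) 0)) {0..1}"
  proof (rule fundamental_theorem_of_calculus_interior)
    show "continuous_on {0..1} (\<lambda>s. s powr (p+1) / (p+1))"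
      using assms by (intro continuous_intros continuous_on_powr') auto
    fix x :: real assume x: "x \<in> {0<..<1}"
    have "((\<lambda>s. s powr (p+1) / (p+1)) has_real_derivative (p+1) * x powr (p+1-1) / (p+1)) (at x)"
      using x by (intro DERIV_cdivide d1) auto
    then show "((\<lambda>s. s powr (p+1) / (p+1)) has_vector_derivative x powr p) (at x)"
      unfolding has_real_derivative_iff_has_vector_derivative[symmetric]
      using assms by simp
  qed simp
  then show ?thesis using assms by simp
qed

lemma powr_int01':
  fixes q :: real assumes "q > -1"
  shows "((\<lambda>s. (1-s) powr q) has_integral (1/(q+1))) {0..1}"
proof -
  have "((\<lambda>s. (1-s) powr q) has_integral ((\<lambda>s. -((1-s) powr (q+1) / (q+1))) 1 - (\<lambda>s. -((1-s) powr (q+1) / (q+1))) 0)) {0..1}"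
  proof (rule fundamental_theorem_of_calculus_interior)
    show "continuous_on {0..1} (\<lambda>s. -((1-s) powr (q+1) / (q+1)))"
      using assms by (intro continuous_intros continuous_on_powr') auto
    fix x :: real assume x: "x \<in> {0<..<1}"
    have "((\<lambda>s. -((1-s) powr (q+1) / (q+1))) has_real_derivative -(-((q+1) * (1-x) powr (q+1-1)) / (q+1))) (at x)"
      using x by (intro DERIV_minus DERIV_cdivide d2) auto
    then show "((\<lambda>s. -((1-s) powr (q+1) / (q+1))) has_vector_derivative (1-x) powr q) (at x)"
      unfolding has_real_derivative_iff_has_vector_derivative[symmetric]
      using assms by simp
  qed simp
  then show ?thesis using assms by simp
qed

definition ww :: "real \<Rightarrow> real \<Rightarrow> real \<Rightarrow> real" where
  "ww p q s = s powr p * (1-s) powr q"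

lemma ww_nonneg: "ww p q s \<ge> 0"
  unfolding ww_def by simp


lemma half_powr_le: fixes x :: real assumes "1/2 \<le> x" "x \<le> 1" "-1 < a" shows "x powr a \<le> 2"
proof -
  have x0: "0 < x" using assms(1) by linarith
  have "x powr a \<le> x powr (-1)"
    using x0 assms(2,3) by (intro powr_mono') auto
  also have "\<dots> = 1/x" using x0 by (simp add: powr_minus divide_inverse)
  also have "\<dots> \<le> 2" using assms(1) x0 by (simp add: field_simps)
  finally show ?thesis .
qed

lemma aux2: "(x::real) \<le> a * 2 \<Longrightarrow> 0 \<le> b \<Longrightarrow> x \<le> 2*(a+b)" by (simp add: algebra_simps)

lemma aux2': "(x::real) \<le> b * 2 \<Longrightarrow> 0 \<le> a \<Longrightarrow> x \<le> 2*(a+b)" by (simp add: algebra_simps)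

lemma ww_bound:
  fixes p q s :: real
  assumes "-1 < p" "-1 < q" "s \<in> {0..1}"
  shows "ww p q s \<le> 2 * (s powr p + (1-s) powr q)"
proof (cases "s \<le> 1/2")
  case True
  then have "(1-s) powr q \<le> 2" using assms by (intro half_powr_le) auto
  then have "ww p q s \<le> s powr p * 2" unfolding ww_def by (intro mult_left_mono) auto
  then show ?thesis by (rule aux2) simp
next
  case False
  then have "s powr p \<le> 2" using assms by (intro half_powr_le) auto
  then have "ww p q s \<le> (1-s) powr q * 2" unfolding ww_def by (subst mult.commute) (intro mult_right_mono, auto)
  then show ?thesis by (rule aux2') simp
qed

lemma spike01: fixes f :: "real \<Rightarrow> 'a::banach" shows "f integrable_on {0<..<1} \<longleftrightarrow> f integrable_on {0..1::real}"
proof (rule integrable_spike_set_eq)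
  show "negligible ({0<..<1::real} - {0..1} \<union> ({0..1} - {0<..<1}))"
    by (rule negligible_subset[of "{0,1}"]) auto
qed

lemma ww_int_open:
  fixes p q :: real
  assumes "-1 < p" "-1 < q"
  shows "(\<lambda>s. 2 * (s powr p + (1-s) powr q)) integrable_on {0<..<1}"
proof -
  have "(\<lambda>s. 2 * (s powr p + (1-s) powr q)) integrable_on {0..1}"
    using has_integral_integrable[OF powr_int01[OF assms(1)]] has_integral_integrable[OF powr_int01'[OF assms(2)]]
    by (intro integrable_on_mult_right integrable_add)
  then show ?thesis
    using spike01 by blast
qed

lemma wint:
  fixes p q :: real and h :: "real \<Rightarrow> real"
  assumes "-1 < p" "-1 < q" "continuous_on {0..1} h"
  shows "(\<lambda>s. ww p q s * h s) integrable_on {0..1}"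
proof -
  have "compact (h ` {0..1})" using assms(3) by (intro compact_continuous_image) auto
  then obtain B where B: "B > 0" "\<And>y. y \<in> h ` {0..1} \<Longrightarrow> norm y \<le> B"
    using compact_imp_bounded[of "h ` {0..1}"] unfolding bounded_pos by auto
  have "(\<lambda>s. ww p q s * h s) integrable_on {0<..<1}"
  proof (rule measurable_bounded_by_integrable_imp_integrable_real)
    show "(\<lambda>s. ww p q s * h s) \<in> borel_measurable (lebesgue_on {0<..<1})"
    proof (rule continuous_imp_measurable_on_sets_lebesgue)
      have "continuous_on {0<..<1} h" by (rule continuous_on_subset[OF assms(3)]) auto
      then show "continuous_on {0<..<1} (\<lambda>s. ww p q s * h s)"
        unfolding ww_def by (intro continuous_intros) auto
    qed simp
    show "(\<lambda>s. B * (2 * (s powr p + (1-s) powr q))) integrable_on {0<..<1}"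
      using ww_int_open[OF assms(1,2)] by (rule integrable_on_mult_right)
    fix s :: real assume s: "s \<in> {0<..<1}"
    have "\<bar>h s\<bar> \<le> B" using B s by auto
    moreover have "ww p q s \<le> 2 * (s powr p + (1-s) powr q)" using ww_bound[OF assms(1,2)] s by auto
    ultimately have "ww p q s * \<bar>h s\<bar> \<le> 2 * (s powr p + (1-s) powr q) * B"
      using ww_nonneg by (intro mult_mono) auto
    then show "\<bar>ww p q s * h s\<bar> \<le> B * (2 * (s powr p + (1-s) powr q))"
      using ww_nonneg[of p q s] by (simp add: abs_mult mult.commute)
  qed simp
  then show ?thesis
    using spike01 by blast
qed

lemma exp_quad:
  fixes z :: real assumes "\<bar>z\<bar> \<le> 1"
  shows "\<bar>exp z - 1 - z\<bar> \<le> z^2"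
proof (cases "z \<ge> 0")
  case True
  have a: "exp z - 1 - z \<ge> 0" using exp_ge_add_one_self[of z] by linarith
  have b: "exp z - 1 - z \<le> z^2" using exp_bound[of z] True assms by auto
  show ?thesis using a b by (simp add: abs_of_nonneg)
next
  case False
  define t where "t = -z"
  have t: "0 < t" "t \<le> 1" using False assms by (auto simp: t_def)
  have "exp t \<ge> 1 + t" by (rule exp_ge_add_one_self)
  then have "exp z \<le> 1 / (1 + t)" using t
    by (simp add: t_def exp_minus field_simps)
  also have "\<dots> \<le> 1 - t + t^2"
    using t by (simp add: field_simps power2_eq_square)
  finally have "exp z \<le> 1 + z + z^2" by (simp add: t_def)
  then have b: "exp z - 1 - z \<le> z^2" by linarith
  have a: "exp z - 1 - z \<ge> 0" using exp_ge_add_one_self[of z] by linarith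
  show ?thesis using a b by (simp add: abs_of_nonneg)
qed

lemma exp_diff_bound:
  fixes x y s :: real
  assumes "\<bar>y - x\<bar> \<le> 1" "0 \<le> x" "s \<in> {0..1}"
  shows "\<bar>exp (- (y * s)) - exp (- (x * s)) + (y-x) * (s * exp (- (x * s)))\<bar> \<le> (y-x)^2"
proof -
  define z where "z = -((y-x) * s)"
  have zb: "\<bar>z\<bar> \<le> 1" using assms by (auto simp: z_def abs_mult intro: mult_le_one)
  have "- (y * s) = - (x * s) + z" by (simp add: z_def algebra_simps)
  then have e: "exp (- (y * s)) = exp (- (x * s)) * exp z" by (metis exp_add)
  have "exp (- (y * s)) - exp (- (x * s)) + (y-x) * (s * exp (- (x * s))) = exp (- (x * s)) * (exp z - 1 - z)"
    by (subst e) (simp add: z_def algebra_simps)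
  then have "\<bar>exp (- (y * s)) - exp (- (x * s)) + (y-x) * (s * exp (- (x * s)))\<bar> = exp (- (x * s)) * \<bar>exp z - 1 - z\<bar>"
    by (simp add: abs_mult)
  also have "\<dots> \<le> 1 * z^2"
    using assms exp_quad[OF zb] by (intro mult_mono) auto
  also have "\<dots> \<le> (y-x)^2" 
  proof -
    have "s^2 \<le> 1" using assms by (auto intro!: power_le_one)
    then have "(y-x)^2 * s^2 \<le> (y-x)^2 * 1" by (intro mult_left_mono) auto
    then show ?thesis by (simp add: z_def power_mult_distrib)
  qed
  finally show ?thesis by simp
qed

definition GG :: "real \<Rightarrow> real \<Rightarrow> nat \<Rightarrow> real \<Rightarrow> real" where
  "GG p q k x = integral {0..1} (\<lambda>s. ww p q s * (s^k * exp (- (x * s))))"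

lemma GG_has_integral:
  assumes "-1 < p" "-1 < q"
  shows "((\<lambda>s. ww p q s * (s^k * exp (- (x * s)))) has_integral GG p q k x) {0..1}"
  unfolding GG_def
  by (intro integrable_integral wint assms continuous_intros)

lemma GG_quad:
  assumes "-1 < p" "-1 < q" "0 \<le> x" "\<bar>y - x\<bar> \<le> 1"
  shows "\<bar>GG p q k y - GG p q k x + (y-x) * GG p q (Suc k) x\<bar> \<le> integral {0..1} (ww p q) * (y-x)^2"
proof -
  let ?f = "\<lambda>s. ww p q s * (s^k * exp (- (y * s))) - ww p q s * (s^k * exp (- (x * s)))
               + (y-x) * (ww p q s * (s^Suc k * exp (- (x * s))))"
  have hf: "(?f has_integral (GG p q k y - GG p q k x + (y-x) * GG p q (Suc k) x)) {0..1}"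
    by (intro has_integral_add has_integral_diff has_integral_mult_right GG_has_integral assms)
  have wi: "(ww p q) integrable_on {0..1}"
    using wint[OF assms(1,2), of "\<lambda>_. 1"] by simp
  have "norm (integral {0..1} ?f) \<le> integral {0..1} (\<lambda>s. ww p q s * (y-x)^2)"
  proof (rule integral_norm_bound_integral)
    show "?f integrable_on {0..1}" using hf by blast
    show "(\<lambda>s. ww p q s * (y-x)^2) integrable_on {0..1}"
      using wi by (rule integrable_on_mult_left)
    fix s :: real assume s: "s \<in> {0..1}"
    have "?f s = ww p q s * s^k * (exp (- (y * s)) - exp (- (x * s)) + (y-x) * (s * exp (- (x * s))))"
      by (simp add: algebra_simps)
    then have "norm (?f s) = ww p q s * s^k * \<bar>exp (- (y * s)) - exp (- (x * s)) + (y-x) * (s * exp (- (x * s)))\<bar>"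
      using s ww_nonneg[of p q s] by (simp add: abs_mult)
    also have "\<dots> \<le> ww p q s * 1 * (y-x)^2"
      using s ww_nonneg[of p q s] exp_diff_bound[OF assms(4,3) s]
      by (intro mult_mono) (auto intro: power_le_one)
    finally show "norm (?f s) \<le> ww p q s * (y-x)^2" by simp
  qed
  also have "\<dots> = integral {0..1} (ww p q) * (y-x)^2"
    by (rule integral_mult_left)
  finally show ?thesis using integral_unique[OF hf] by simp
qed

lemma sq_abs_div: "(a::real) \<noteq> 0 \<Longrightarrow> W * a^2 / \<bar>a\<bar> = W * \<bar>a\<bar>"
  by (cases "a > 0") (auto simp: power2_eq_square)

lemma GG_deriv:
  assumes "-1 < p" "-1 < q" "0 \<le> x"
  shows "(GG p q k has_real_derivative - GG p q (Suc k) x) (at x within {0..})"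
  unfolding has_field_derivative_iff
proof (rule tendsto_sandwich)
  define W where "W = integral {0..1} (ww p q)"
  define D where "D = - GG p q (Suc k) x"
  have ev: "\<forall>\<^sub>F y in at x within {0..}. y \<ge> 0 \<and> y \<noteq> x \<and> \<bar>y - x\<bar> < 1"
    unfolding eventually_at by (rule exI[of _ 1]) (auto simp: dist_real_def)
  have key: "\<bar>(GG p q k y - GG p q k x) / (y - x) - D\<bar> \<le> W * \<bar>y - x\<bar>"
    if y: "y \<ge> 0" "y \<noteq> x" "\<bar>y - x\<bar> < 1" for y
  proof -
    have b: "\<bar>GG p q k y - GG p q k x + (y-x) * GG p q (Suc k) x\<bar> \<le> W * (y-x)^2"
      using GG_quad[OF assms(1,2,3), of y k] y by (simp add: W_def)
    have "(GG p q k y - GG p q k x) / (y - x) - D = (GG p q k y - GG p q k x + (y-x) * GG p q (Suc k) x) / (y - x)"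
      using y by (simp add: D_def field_simps)
    then have "\<bar>(GG p q k y - GG p q k x) / (y - x) - D\<bar> = \<bar>GG p q k y - GG p q k x + (y-x) * GG p q (Suc k) x\<bar> / \<bar>y - x\<bar>"
      by (simp add: abs_divide)
    also have "\<dots> \<le> W * (y-x)^2 / \<bar>y - x\<bar>"
      using b by (intro divide_right_mono) auto
    also have "\<dots> = W * \<bar>y - x\<bar>"
      using y sq_abs_div[of "y - x" W] by simp
    finally show ?thesis .
  qed
  have ev2: "\<forall>\<^sub>F y in at x within {0..}. \<bar>(GG p q k y - GG p q k x) / (y - x) - D\<bar> \<le> W * \<bar>y - x\<bar>"
    using ev by eventually_elim (intro key, auto)
  show "\<forall>\<^sub>F y in at x within {0..}. D - W * \<bar>y - x\<bar> \<le> (GG p q k y - GG p q k x) / (y - x)"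
    using ev2 by eventually_elim (simp add: abs_le_iff)
  show "\<forall>\<^sub>F y in at x within {0..}. (GG p q k y - GG p q k x) / (y - x) \<le> D + W * \<bar>y - x\<bar>"
    using ev2 by eventually_elim (simp add: abs_le_iff)
  have "((\<lambda>y. D - W * \<bar>y - x\<bar>) \<longlongrightarrow> D - W * \<bar>x - x\<bar>) (at x within {0..})"
    by (intro tendsto_intros)
  then show "((\<lambda>y. D - W * \<bar>y - x\<bar>) \<longlongrightarrow> - GG p q (Suc k) x) (at x within {0..})"
    by (simp add: D_def)
  have "((\<lambda>y. D + W * \<bar>y - x\<bar>) \<longlongrightarrow> D + W * \<bar>x - x\<bar>) (at x within {0..})"
    by (intro tendsto_intros)
  then show "((\<lambda>y. D + W * \<bar>y - x\<bar>) \<longlongrightarrow> - GG p q (Suc k) x) (at x within {0..})"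
    by (simp add: D_def)
qed

lemma GG_identity:
  assumes "-1 < p" "-1 < q"
  shows "(p+1) * GG p q 0 x - (p+q+2+x) * GG p q 1 x + x * GG p q 2 x = 0"
proof -
  define H where "H = (\<lambda>s::real. s powr (p+1) * (1-s) powr (q+1) * exp (- (x * s)))"
  define h where "h = (\<lambda>s. (p+1) * (ww p q s * (s^0 * exp (- (x * s)))) - (p+q+2+x) * (ww p q s * (s^1 * exp (- (x * s))))
                          + x * (ww p q s * (s^2 * exp (- (x * s)))))"
  have "(h has_integral (H 1 - H 0)) {0..1}"
  proof (rule fundamental_theorem_of_calculus_interior)
    show "continuous_on {0..1} H"
      unfolding H_def using assms
      by (intro continuous_intros continuous_on_powr') auto
    fix s :: real assume s: "s \<in> {0<..<1}"
    have d: "(H has_real_derivative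
        ((p+1) * s powr (p+1-1) * (1-s) powr (q+1) + (-((q+1) * (1-s) powr (q+1-1))) * s powr (p+1)) * exp (- (x * s))
        + (exp (- (x * s)) * (- x)) * (s powr (p+1) * (1-s) powr (q+1))) (at s)"
      unfolding H_def using s
      by (intro DERIV_mult d1 d2 DERIV_fun_exp) (auto intro!: derivative_eq_intros)
    have e1: "s powr (p+1) = s powr p * s" using s by (simp add: powr_add)
    have e2: "(1-s) powr (q+1) = (1-s) powr q * (1-s)" using s by (simp add: powr_add)
    have "((p+1) * s powr (p+1-1) * (1-s) powr (q+1) + (-((q+1) * (1-s) powr (q+1-1))) * s powr (p+1)) * exp (- (x * s))
        + (exp (- (x * s)) * (- x)) * (s powr (p+1) * (1-s) powr (q+1)) = h s"
      unfolding h_def ww_def e1 e2 by (simp add: algebra_simps power2_eq_square)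
    with d show "(H has_vector_derivative h s) (at s)"
      unfolding has_real_derivative_iff_has_vector_derivative[symmetric] by simp
  qed simp
  moreover have "H 1 - H 0 = 0" using assms by (simp add: H_def)
  ultimately have h0: "(h has_integral 0) {0..1}" by simp
  have "(h has_integral ((p+1) * GG p q 0 x - (p+q+2+x) * GG p q 1 x + x * GG p q 2 x)) {0..1}"
    unfolding h_def
    by (intro has_integral_add has_integral_diff has_integral_mult_right GG_has_integral assms)
  from has_integral_unique[OF this h0] show ?thesis .
qed

lemma poly_int: "((\<lambda>s::real. s * (1 - s)) has_integral 1/6) {0..1}"
proof -
  have "((\<lambda>s::real. s * (1 - s)) has_integral ((\<lambda>s. s^2/2 - s^3/3) 1 - (\<lambda>s. s^2/2 - s^3/3) 0)) {0..1}"
    by (intro fundamental_theorem_of_calculus)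
       (auto intro!: derivative_eq_intros simp: has_real_derivative_iff_has_vector_derivative[symmetric] algebra_simps power2_eq_square)
  then show ?thesis by simp
qed

lemma GG0_pos:
  assumes "-1 < p" "-1 < q" "p \<le> 1" "q \<le> 1" "0 \<le> x"
  shows "GG p q 0 x > 0"
proof -
  have "integral {0..1} (\<lambda>s. exp (- x) * (s * (1 - s))) \<le> GG p q 0 x"
    unfolding GG_def
  proof (rule integral_le)
    show "(\<lambda>s. exp (- x) * (s * (1 - s))) integrable_on {0..1}"
      using poly_int by (intro integrable_on_mult_right) blast
    show "(\<lambda>s. ww p q s * (s ^ 0 * exp (- (x * s)))) integrable_on {0..1}"
      using GG_has_integral[OF assms(1,2)] by blast
    fix s :: real assume s: "s \<in> {0..1}"
    have a: "s \<le> s powr p"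
      using powr_mono'[of p 1 s] s assms by auto
    have b: "1 - s \<le> (1-s) powr q"
      using powr_mono'[of q 1 "1-s"] s assms by auto
    have "x * s \<le> x" using s assms(5) by (simp add: mult_left_le)
    then have c: "exp (- x) \<le> exp (- (x * s))" by simp
    have "exp (- x) * (s * (1 - s)) = (s * (1 - s)) * exp (- x)" by simp
    also have "\<dots> \<le> (s powr p * (1-s) powr q) * exp (- (x * s))"
      using a b c s by (intro mult_mono) auto
    finally show "exp (- x) * (s * (1 - s)) \<le> ww p q s * (s ^ 0 * exp (- (x * s)))"
      by (simp add: ww_def)
  qed
  moreover have "integral {0..1} (\<lambda>s. exp (- x) * (s * (1 - s))) = exp (- x) / 6"
    using integral_unique[OF has_integral_mult_right[OF poly_int, of "exp (- x)"]] by simp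
  moreover have "exp (- x) / 6 > 0" by simp
  ultimately show ?thesis by linarith
qed

lemma exp_le_powr:
  fixes y a :: real
  assumes "0 \<le> y" "1 \<le> a"
  shows "exp (- y) \<le> a powr a * (1+y) powr (- a)"
proof -
  have "1 + y/a \<le> exp (y/a)" by (rule exp_ge_add_one_self)
  then have "(1 + y/a) powr a \<le> exp (y/a) powr a"
    using assms by (intro powr_mono2) auto
  also have "\<dots> = exp y" using assms by (simp add: exp_powr_real)
  finally have 1: "(1 + y/a) powr a \<le> exp y" .
  have "1 + y \<le> a * (1 + y/a)" using assms by (simp add: field_simps)
  then have "(1+y) powr a \<le> (a * (1 + y/a)) powr a"
    using assms by (intro powr_mono2) auto
  also have "\<dots> = a powr a * (1 + y/a) powr a"
    using assms by (simp add: powr_mult)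
  also have "\<dots> \<le> a powr a * exp y"
    using 1 by (intro mult_left_mono) auto
  finally have 2: "(1+y) powr a \<le> a powr a * exp y" .
  have pos: "(1+y) powr a > 0" using assms by simp
  have "exp (- y) = 1 / exp y" by (simp add: exp_minus field_simps)
  also have "\<dots> \<le> a powr a / (1+y) powr a"
    using 2 pos by (simp add: field_simps)
  also have "\<dots> = a powr a * (1+y) powr (- a)"
    by (simp add: powr_minus divide_inverse)
  finally show ?thesis .
qed

lemma sp_int:
  fixes p x :: real
  assumes "-1 < p" "0 \<le> x"
  shows "((\<lambda>s. s powr p * (1 + x * s) powr (-(p+2))) has_integral ((1+x) powr (-(p+1)) / (p+1))) {0..1}"
proof -
  have pos0: "1 + x * s \<noteq> 0" if "0 \<le> s" for s
  proof -
    have "0 \<le> x * s" using assms that by simp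
    then show ?thesis by linarith
  qed
  define F where "F = (\<lambda>s::real. s powr (p+1) * (1 + x * s) powr (-(p+1)) / (p+1))"
  have "((\<lambda>s. s powr p * (1 + x * s) powr (-(p+2))) has_integral (F 1 - F 0)) {0..1}"
  proof (rule fundamental_theorem_of_calculus_interior)
    show "continuous_on {0..1} F"
      unfolding F_def
      using assms pos0 by (intro continuous_intros continuous_on_powr') auto
    fix s :: real assume s: "s \<in> {0<..<1}"
    have pos: "1 + x * s > 0" using s assms by (simp add: add_pos_nonneg)
    have dd: "((\<lambda>s. (1 + x * s) powr (-(p+1))) has_real_derivative (-(p+1)) * (1 + x * s) powr (-(p+1) - of_nat 1) * x) (at s)"
      by (rule DERIV_fun_powr) (use pos in \<open>auto intro!: derivative_eq_intros\<close>)
    have d: "(F has_real_derivative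
         ((p+1) * s powr (p+1-1) * (1 + x * s) powr (-(p+1)) + ((-(p+1)) * (1 + x * s) powr (-(p+1) - of_nat 1) * x) * s powr (p+1)) / (p+1)) (at s)"
      unfolding F_def using s by (intro DERIV_cdivide DERIV_mult d1 dd) auto
    have e1: "s powr (p+1) = s powr p * s" using s by (simp add: powr_add)
    have e2: "(1 + x * s) powr (-(p+1)) = (1 + x * s) powr (-(p+2)) * (1 + x * s)"
    proof -
      have "(1 + x * s) powr (-(p+2)) * (1 + x * s) = (1 + x * s) powr (-(p+2)) * (1 + x * s) powr 1"
        using pos by simp
      also have "\<dots> = (1 + x * s) powr (-(p+2) + 1)" by (rule powr_add[symmetric])
      also have "-(p+2) + 1 = -(p+1)" by simp
      finally show ?thesis by simp
    qed
    have e3: "(1 + x * s) powr (-(p+1) - of_nat 1) = (1 + x * s) powr (-(p+2))" by (simp add: algebra_simps)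
    have "((p+1) * s powr (p+1-1) * (1 + x * s) powr (-(p+1)) + ((-(p+1)) * (1 + x * s) powr (-(p+1) - of_nat 1) * x) * s powr (p+1)) / (p+1)
        = s powr p * (1 + x * s) powr (-(p+2))"
      unfolding e1 e2 e3 using assms by (simp add: field_simps)
    with d show "(F has_vector_derivative s powr p * (1 + x * s) powr (-(p+2))) (at s)"
      unfolding has_real_derivative_iff_has_vector_derivative[symmetric] by simp
  qed simp
  moreover have "F 1 - F 0 = (1+x) powr (-(p+1)) / (p+1)"
    using assms by (simp add: F_def add.commute)
  ultimately show ?thesis by simp
qed

lemma half_powr: "((x::real)/2) powr (-a) = 2 powr a * x powr (-a)"
proof -
  have e1: "((x::real)/2) powr (-a) = x powr (-a) / 2 powr (-a)" by (rule powr_divide)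
  have e2: "(2::real) powr (-a) = inverse (2 powr a)" by (rule powr_minus)
  have e3: "(x::real) powr (-a) / inverse (2 powr a) = 2 powr a * x powr (-a)" by (simp add: divide_inverse)
  show ?thesis unfolding e1 e2 e3 ..
qed

lemma G0_bound:
  fixes p q x :: real
  assumes "-1 < p" "-1 < q" "1 \<le> x"
  shows "GG p q 0 x \<le> (2 * (p+2) powr (p+2) / (p+1) + integral {0..1} (ww p q) * ((p+2) powr (p+2) * 2 powr (p+2))) * x powr (-(p+1))"
proof -
  define a where "a = p + 2"
  define C where "C = a powr a"
  define W where "W = integral {0..1} (ww p q)"
  have a1: "1 \<le> a" using assms by (simp add: a_def)
  have x0: "0 \<le> x" using assms by simp
  have wi: "(ww p q) integrable_on {0..1}"
    using wint[OF assms(1,2), of "\<lambda>_. 1"] by simp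
  have W0: "0 \<le> W" unfolding W_def using wi ww_nonneg by (intro integral_nonneg) auto
  have C0: "0 \<le> C" by (simp add: C_def)
  have i1: "((\<lambda>s. 2 * C * (s powr p * (1 + x * s) powr (-a))) has_integral (2 * C * ((1+x) powr (-(p+1)) / (p+1)))) {0..1}"
    using sp_int[OF assms(1) x0] unfolding a_def by (rule has_integral_mult_right)
  have i2: "((\<lambda>s. ww p q s * exp (- (x/2))) has_integral (W * exp (- (x/2)))) {0..1}"
    unfolding W_def using wi by (intro has_integral_mult_left integrable_integral)
  have "GG p q 0 x \<le> integral {0..1} (\<lambda>s. 2 * C * (s powr p * (1 + x * s) powr (-a)) + ww p q s * exp (- (x/2)))"
    unfolding GG_def
  proof (rule integral_le)
    show "(\<lambda>s. ww p q s * (s ^ 0 * exp (- (x * s)))) integrable_on {0..1}"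
      using GG_has_integral[OF assms(1,2)] by blast
    show "(\<lambda>s. 2 * C * (s powr p * (1 + x * s) powr (-a)) + ww p q s * exp (- (x/2))) integrable_on {0..1}"
      using i1 i2 by (intro integrable_add) blast+
    fix s :: real assume s: "s \<in> {0..1}"
    have t1: "0 \<le> 2 * C * (s powr p * (1 + x * s) powr (-a))" using C0 by simp
    have t2: "0 \<le> ww p q s * exp (- (x/2))" using ww_nonneg[of p q s] by simp
    show "ww p q s * (s ^ 0 * exp (- (x * s))) \<le> 2 * C * (s powr p * (1 + x * s) powr (-a)) + ww p q s * exp (- (x/2))"
    proof (cases "s \<le> 1/2")
      case True
      have h1: "(1-s) powr q \<le> 2" using True s assms by (intro half_powr_le) auto
      have h2: "exp (- (x * s)) \<le> C * (1 + x * s) powr (-a)"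
        unfolding C_def using exp_le_powr[of "x * s" a] s x0 a1 by simp
      have "ww p q s * (s ^ 0 * exp (- (x * s))) = s powr p * ((1-s) powr q * exp (- (x * s)))"
        by (simp add: ww_def)
      also have "\<dots> \<le> s powr p * (2 * (C * (1 + x * s) powr (-a)))"
        using h1 h2 by (intro mult_left_mono mult_mono) auto
      also have "\<dots> = 2 * C * (s powr p * (1 + x * s) powr (-a))" by simp
      finally show ?thesis using t2 by linarith
    next
      case False
      have "x * (1/2) \<le> x * s" by (rule mult_left_mono) (use False x0 in auto)
      then have "x / 2 \<le> x * s" by simp
      then have h: "exp (- (x * s)) \<le> exp (- (x/2))" by simp
      have "ww p q s * (s ^ 0 * exp (- (x * s))) \<le> ww p q s * exp (- (x/2))"
        using h ww_nonneg[of p q s] by (simp add: mult_left_mono)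
      then show ?thesis using t1 by linarith
    qed
  qed
  also have "\<dots> = 2 * C * ((1+x) powr (-(p+1)) / (p+1)) + W * exp (- (x/2))"
    using integral_unique[OF has_integral_add[OF i1 i2]] .
  also have "\<dots> \<le> 2 * C * (x powr (-(p+1)) / (p+1)) + W * (C * 2 powr a * x powr (-(p+1)))"
  proof -
    have b1: "(1+x) powr (-(p+1)) \<le> x powr (-(p+1))"
      by (rule powr_mono2') (use assms in auto)
    have b2: "exp (- (x/2)) \<le> C * 2 powr a * x powr (-(p+1))"
    proof -
      have "exp (- (x/2)) \<le> C * (1 + x/2) powr (-a)"
        unfolding C_def using exp_le_powr[of "x/2" a] x0 a1 by simp
      also have "\<dots> \<le> C * (x/2) powr (-a)"
        using assms a1 C0 by (intro mult_left_mono powr_mono2') auto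
      also have "C * (x/2) powr (-a) = C * (2 powr a * x powr (-a))"
        by (simp only: half_powr)
      also have "C * (2 powr a * x powr (-a)) \<le> C * 2 powr a * x powr (-(p+1))"
      proof -
        have "x powr (-a) \<le> x powr (-(p+1))"
          using assms by (intro powr_mono) (auto simp: a_def)
        then show ?thesis using C0 by (simp add: mult.assoc mult_left_mono)
      qed
      finally show ?thesis .
    qed
    have c1: "2 * C * ((1+x) powr (-(p+1)) / (p+1)) \<le> 2 * C * (x powr (-(p+1)) / (p+1))"
      using b1 C0 assms(1) by (intro mult_left_mono divide_right_mono) auto
    have c2: "W * exp (- (x/2)) \<le> W * (C * 2 powr a * x powr (-(p+1)))"
      using b2 W0 by (rule mult_left_mono)
    show ?thesis using c1 c2 by (rule add_mono)
  qed
  also have "\<dots> = (2 * (p+2) powr (p+2) / (p+1) + W * ((p+2) powr (p+2) * 2 powr (p+2))) * x powr (-(p+1))"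
    unfolding C_def a_def by (simp add: distrib_right)
  finally show ?thesis by (simp add: W_def)
qed

lemma GG_chain:
  assumes "-1 < p" "-1 < q" "0 \<le> \<beta>" "0 \<le> \<xi>"
  shows "((\<lambda>\<xi>. GG p q k (\<beta> * \<xi>^2)) has_real_derivative (- GG p q (Suc k) (\<beta> * \<xi>^2) * (2 * \<beta> * \<xi>))) (at \<xi> within {0..})"
proof -
  have g: "((\<lambda>\<xi>. \<beta> * \<xi>^2) has_real_derivative 2 * \<beta> * \<xi>) (at \<xi> within {0..})"
    by (auto intro!: derivative_eq_intros)
  have f: "(GG p q k has_real_derivative - GG p q (Suc k) (\<beta> * \<xi>^2)) (at (\<beta> * \<xi>^2) within ((\<lambda>\<xi>. \<beta> * \<xi>^2) ` {0..}))"
    by (rule DERIV_subset[OF GG_deriv]) (use assms in auto)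
  from DERIV_image_chain[OF f g] show ?thesis by (simp add: o_def)
qed

lemma ode_alg:
  fixes \<mu> \<beta> p q \<xi> A B C :: real
  assumes "\<mu> = 2*\<beta>" "4*\<beta>*(p+1) = 1" "4*\<beta>*(p+q+2) = 6*\<beta>"
    "(p+1)*A - (p+q+2+\<beta>*\<xi>^2)*B + \<beta>*\<xi>^2*C = 0"
  shows "(\<mu>-1)*(\<xi>*A) - \<mu>*\<xi>*(A - 2*\<beta>*\<xi>^2*B) = -6*\<beta>*\<xi>*B + 4*\<beta>^2*\<xi>^3*C"
proof -
  have h: "4*\<beta>*\<xi>*((p+1)*A - (p+q+2+\<beta>*\<xi>^2)*B + \<beta>*\<xi>^2*C) = 0" using assms(4) by simp
  have e: "4*\<beta>*\<xi>*((p+1)*A - (p+q+2+\<beta>*\<xi>^2)*B + \<beta>*\<xi>^2*C)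
      = \<xi>*(4*\<beta>*(p+1))*A - \<xi>*(4*\<beta>*(p+q+2))*B - 4*\<beta>^2*\<xi>^3*B + 4*\<beta>^2*\<xi>^3*C"
    by (simp add: algebra_simps power2_eq_square power3_eq_cube)
  have "\<xi>*A - \<xi>*(6*\<beta>)*B - 4*\<beta>^2*\<xi>^3*B + 4*\<beta>^2*\<xi>^3*C = 0"
    using h e assms(2,3) by simp
  then show ?thesis using assms(1)
    by (simp add: algebra_simps power2_eq_square power3_eq_cube)
qed

lemma main_gt:
  fixes \<mu> :: real
  assumes mu: "1/3 < \<mu>" "\<mu> < 1"
  shows "\<exists>f f' f'' :: real \<Rightarrow> real.
     (\<forall>\<xi>\<ge>0. (f has_real_derivative f' \<xi>) (at \<xi> within {0..}) \<and>
               (f' has_real_derivative f'' \<xi>) (at \<xi> within {0..}) \<and>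
               (\<mu> - 1) * f \<xi> - \<mu> * \<xi> * f' \<xi> = f'' \<xi>) \<and>
     f 0 = 0 \<and>
     (f \<longlongrightarrow> 0) at_top \<and>
     (\<forall>\<xi>>0. f \<xi> > 0) \<and>
     f \<in> O[at_top](\<lambda>\<xi>. \<xi> powr (1 - 1/\<mu>))"
proof -
  define p where "p = 1/(2*\<mu>) - 1"
  define q where "q = 1/2 - 1/(2*\<mu>)"
  define \<beta> where "\<beta> = \<mu>/2"
  have mu0: "0 < \<mu>" using mu by simp
  have inv: "1/(2*\<mu>) < 3/2" using mu mu0 by (simp add: field_simps)
  have inv0: "0 < 1/(2*\<mu>)" using mu0 by simp
  have p1: "-1 < p" using inv0 by (simp add: p_def)
  have p2: "p \<le> 1" using inv by (simp add: p_def)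
  have q1: "-1 < q" using inv by (simp add: q_def)
  have q2: "q \<le> 1" using inv0 unfolding q_def by linarith
  have b0: "0 < \<beta>" using mu0 by (simp add: \<beta>_def)
  have c1: "\<mu> = 2*\<beta>" by (simp add: \<beta>_def)
  have c2: "4*\<beta>*(p+1) = 1" using mu0 by (simp add: \<beta>_def p_def field_simps)
  have c3: "4*\<beta>*(p+q+2) = 6*\<beta>" using mu0 by (simp add: \<beta>_def p_def q_def field_simps)
  define G where "G = (\<lambda>k \<xi>. GG p q k (\<beta> * \<xi>^2))"
  define f where "f = (\<lambda>\<xi>::real. \<xi> * G 0 \<xi>)"
  define f' where "f' = (\<lambda>\<xi>::real. G 0 \<xi> - 2*\<beta>*\<xi>^2 * G 1 \<xi>)"
  define f'' where "f'' = (\<lambda>\<xi>::real. -6*\<beta>*\<xi> * G 1 \<xi> + 4*\<beta>^2*\<xi>^3 * G 2 \<xi>)"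
  have dG: "((\<lambda>\<xi>. G k \<xi>) has_real_derivative (- G (Suc k) \<xi> * (2 * \<beta> * \<xi>))) (at \<xi> within {0..})"
    if "0 \<le> \<xi>" for k \<xi>
    unfolding G_def using GG_chain[OF p1 q1 _ that, of \<beta> k] b0 by simp
  have ode: "(f has_real_derivative f' \<xi>) (at \<xi> within {0..}) \<and>
               (f' has_real_derivative f'' \<xi>) (at \<xi> within {0..}) \<and>
               (\<mu> - 1) * f \<xi> - \<mu> * \<xi> * f' \<xi> = f'' \<xi>" if xi: "0 \<le> \<xi>" for \<xi>
  proof (intro conjI)
    have "((\<lambda>\<xi>. \<xi> * G 0 \<xi>) has_real_derivative 1 * G 0 \<xi> + (- G (Suc 0) \<xi> * (2 * \<beta> * \<xi>)) * \<xi>) (at \<xi> within {0..})"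
      by (intro DERIV_mult DERIV_ident dG xi)
    then show "(f has_real_derivative f' \<xi>) (at \<xi> within {0..})"
      unfolding f_def f'_def by (rule DERIV_cong) (simp add: algebra_simps power2_eq_square)
    have "((\<lambda>\<xi>. G 0 \<xi> - 2*\<beta>*\<xi>^2 * G 1 \<xi>) has_real_derivative
        (- G (Suc 0) \<xi> * (2 * \<beta> * \<xi>)) - ((2*\<beta>*(2*\<xi>)) * G 1 \<xi> + (- G (Suc 1) \<xi> * (2 * \<beta> * \<xi>)) * (2*\<beta>*\<xi>^2))) (at \<xi> within {0..})"
      by (intro DERIV_diff DERIV_mult DERIV_cmult dG xi) (auto intro!: derivative_eq_intros)
    then show "(f' has_real_derivative f'' \<xi>) (at \<xi> within {0..})"
      unfolding f'_def f''_def by (rule DERIV_cong) (simp add: algebra_simps power2_eq_square power3_eq_cube numeral_2_eq_2)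
    have id: "(p+1) * G 0 \<xi> - (p+q+2+\<beta>*\<xi>^2) * G 1 \<xi> + \<beta>*\<xi>^2 * G 2 \<xi> = 0"
      using GG_identity[OF p1 q1, of "\<beta> * \<xi>^2"] by (simp add: G_def)
    show "(\<mu> - 1) * f \<xi> - \<mu> * \<xi> * f' \<xi> = f'' \<xi>"
      unfolding f_def f'_def f''_def by (rule ode_alg[OF c1 c2 c3 id])
  qed
  have pos: "f \<xi> > 0" if "\<xi> > 0" for \<xi>
    unfolding f_def G_def using GG0_pos[OF p1 q1 p2 q2, of "\<beta> * \<xi>^2"] that b0 by simp
  define K where "K = (2 * (p+2) powr (p+2) / (p+1) + integral {0..1} (ww p q) * ((p+2) powr (p+2) * 2 powr (p+2))) * \<beta> powr (-(p+1))"
  have bound: "f \<xi> \<le> K * \<xi> powr (1 - 1/\<mu>)" if xi: "\<xi> \<ge> 1/\<beta>" for \<xi>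
  proof -
    define M where "M = 2 * (p+2) powr (p+2) / (p+1) + integral {0..1} (ww p q) * ((p+2) powr (p+2) * 2 powr (p+2))"
    have b1: "\<beta> \<le> 1" using mu by (simp add: \<beta>_def)
    have "1 \<le> 1/\<beta>" using b0 b1 by simp
    then have x1: "1 \<le> \<xi>" using xi by linarith
    have "\<xi> * 1 \<le> \<xi> * \<xi>" using x1 by (intro mult_left_mono) auto
    then have "1/\<beta> \<le> \<xi>^2" using xi by (simp add: power2_eq_square)
    then have x2: "1 \<le> \<beta> * \<xi>^2" using b0 by (simp add: field_simps)
    have "f \<xi> = \<xi> * GG p q 0 (\<beta> * \<xi>^2)" by (simp add: f_def G_def)
    also have "\<dots> \<le> \<xi> * (M * (\<beta> * \<xi>^2) powr (-(p+1)))"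
      using G0_bound[OF p1 q1 x2] x1 unfolding M_def by (intro mult_left_mono) auto
    finally have le: "f \<xi> \<le> \<xi> * (M * (\<beta> * \<xi>^2) powr (-(p+1)))" .
    have e0: "\<xi>^2 = \<xi> powr 2" using x1 by (simp add: powr_numeral)
    have e1: "(\<beta> * \<xi>^2) powr (-(p+1)) = \<beta> powr (-(p+1)) * \<xi> powr (2 * (-(p+1)))"
    proof -
      have "(\<beta> * \<xi>^2) powr (-(p+1)) = \<beta> powr (-(p+1)) * (\<xi>^2) powr (-(p+1))" by (rule powr_mult)
      also have "(\<xi>^2) powr (-(p+1)) = (\<xi> powr 2) powr (-(p+1))" by (simp only: e0)
      also have "\<dots> = \<xi> powr (2 * (-(p+1)))" by (rule powr_powr)
      finally show ?thesis .
    qed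
    have e2: "\<xi> * \<xi> powr (2 * (-(p+1))) = \<xi> powr (1 - 1/\<mu>)"
    proof -
      have a: "\<xi> * \<xi> powr (2 * (-(p+1))) = \<xi> powr 1 * \<xi> powr (2 * (-(p+1)))" using x1 by simp
      have b: "\<xi> powr 1 * \<xi> powr (2 * (-(p+1))) = \<xi> powr (1 + 2 * (-(p+1)))" by (rule powr_add[symmetric])
      have c: "1 + 2 * (-(p+1)) = 1 - 1/\<mu>" using mu0 by (simp add: p_def field_simps)
      show ?thesis unfolding a b c ..
    qed
    have "\<xi> * (M * (\<beta> * \<xi>^2) powr (-(p+1))) = M * \<beta> powr (-(p+1)) * (\<xi> * \<xi> powr (2 * (-(p+1))))"
      unfolding e1 by (simp only: ac_simps)
    also have "\<dots> = K * \<xi> powr (1 - 1/\<mu>)" unfolding e2 K_def M_def ..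
    finally show ?thesis using le by simp
  qed
  have ev: "\<forall>\<^sub>F \<xi> in at_top. 0 \<le> f \<xi> \<and> f \<xi> \<le> K * \<xi> powr (1 - 1/\<mu>)"
    using eventually_ge_at_top[of "max 1 (1/\<beta>)"]
  proof eventually_elim
    case (elim \<xi>)
    then show ?case using pos[of \<xi>] bound[of \<xi>] by auto
  qed
  have neg: "1 - 1/\<mu> < 0" using mu mu0 by (simp add: field_simps)
  have lim0: "((\<lambda>\<xi>. \<xi> powr (1 - 1/\<mu>)) \<longlongrightarrow> 0) at_top"
    by (rule tendsto_neg_powr[OF neg filterlim_ident])
  have "(f \<longlongrightarrow> 0) at_top"
  proof (rule tendsto_sandwich[of "\<lambda>_. 0" f at_top "\<lambda>\<xi>. K * \<xi> powr (1 - 1/\<mu>)"])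
    show "\<forall>\<^sub>F \<xi> in at_top. 0 \<le> f \<xi>" using ev by eventually_elim auto
    show "\<forall>\<^sub>F \<xi> in at_top. f \<xi> \<le> K * \<xi> powr (1 - 1/\<mu>)" using ev by eventually_elim auto
    show "((\<lambda>\<xi>. K * \<xi> powr (1 - 1/\<mu>)) \<longlongrightarrow> 0) at_top"
      using tendsto_mult_right_zero[OF lim0, of K] by simp
  qed simp
  moreover have "f \<in> O[at_top](\<lambda>\<xi>. \<xi> powr (1 - 1/\<mu>))"
  proof (rule bigoI[of _ K])
    show "\<forall>\<^sub>F \<xi> in at_top. norm (f \<xi>) \<le> K * norm (\<xi> powr (1 - 1/\<mu>))"
      using ev by eventually_elim auto
  qed
  moreover have "f 0 = 0" by (simp add: f_def)
  ultimately show ?thesis using ode pos by blast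
qed

lemma main_eq:
  shows "\<exists>f f' f'' :: real \<Rightarrow> real.
     (\<forall>\<xi>\<ge>0. (f has_real_derivative f' \<xi>) (at \<xi> within {0..}) \<and>
               (f' has_real_derivative f'' \<xi>) (at \<xi> within {0..}) \<and>
               (1/3 - 1) * f \<xi> - 1/3 * \<xi> * f' \<xi> = f'' \<xi>) \<and>
     f 0 = 0 \<and>
     (f \<longlongrightarrow> 0) at_top \<and>
     (\<forall>\<xi>>0. f \<xi> > 0) \<and>
     (\<forall>\<xi>\<ge>0. f \<xi> = \<xi> * exp (- (\<xi>^2) / 6))"
proof -
  define f where "f = (\<lambda>\<xi>::real. \<xi> * exp (- (\<xi>^2) / 6))"
  define f' where "f' = (\<lambda>\<xi>::real. (1 - \<xi>^2/3) * exp (- (\<xi>^2) / 6))"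
  define f'' where "f'' = (\<lambda>\<xi>::real. (\<xi>^3/9 - \<xi>) * exp (- (\<xi>^2) / 6))"
  have ode: "(f has_real_derivative f' \<xi>) (at \<xi> within {0..}) \<and>
               (f' has_real_derivative f'' \<xi>) (at \<xi> within {0..}) \<and>
               (1/3 - 1) * f \<xi> - 1/3 * \<xi> * f' \<xi> = f'' \<xi>" for \<xi>
  proof (intro conjI)
    show "(f has_real_derivative f' \<xi>) (at \<xi> within {0..})"
      unfolding f_def f'_def
      by (rule derivative_eq_intros refl | simp)+ (simp add: algebra_simps power2_eq_square)
    show "(f' has_real_derivative f'' \<xi>) (at \<xi> within {0..})"
      unfolding f'_def f''_def
      by (rule derivative_eq_intros refl | simp)+ (simp add: field_simps power2_eq_square power3_eq_cube)
    show "(1/3 - 1) * f \<xi> - 1/3 * \<xi> * f' \<xi> = f'' \<xi>"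
      unfolding f_def f'_def f''_def by (simp add: field_simps power2_eq_square power3_eq_cube)
  qed
  have "(f \<longlongrightarrow> 0) at_top" unfolding f_def by real_asymp
  moreover have "\<forall>\<xi>>0. f \<xi> > 0" by (simp add: f_def)
  moreover have "f 0 = 0" by (simp add: f_def)
  moreover have "\<forall>\<xi>\<ge>0. f \<xi> = \<xi> * exp (- (\<xi>^2) / 6)" by (simp add: f_def)
  ultimately show ?thesis using ode by blast
qed

theorem proposition2p1:
  fixes \<mu> :: real
  assumes "1/3 \<le> \<mu>" and "\<mu> < 1"
  shows "\<exists>f f' f'' :: real \<Rightarrow> real.
     (\<forall>\<xi>\<ge>0. (f has_real_derivative f' \<xi>) (at \<xi> within {0..}) \<and>
               (f' has_real_derivative f'' \<xi>) (at \<xi> within {0..}) \<and>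
               (\<mu> - 1) * f \<xi> - \<mu> * \<xi> * f' \<xi> = f'' \<xi>) \<and>
     f 0 = 0 \<and>
     (f \<longlongrightarrow> 0) at_top \<and>
     (\<forall>\<xi>>0. f \<xi> > 0) \<and>
     (1/3 < \<mu> \<longrightarrow> f \<in> O[at_top](\<lambda>\<xi>. \<xi> powr (1 - 1/\<mu>))) \<and>
     (\<mu> = 1/3 \<longrightarrow> (\<forall>\<xi>\<ge>0. f \<xi> = \<xi> * exp (- (\<xi>^2) / 6)))"
proof (cases "\<mu> = 1/3")
  case True
  from main_eq obtain f f' f'' :: "real \<Rightarrow> real" where
    H: "\<forall>\<xi>\<ge>0. (f has_real_derivative f' \<xi>) (at \<xi> within {0..}) \<and>
               (f' has_real_derivative f'' \<xi>) (at \<xi> within {0..}) \<and>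
               (1/3 - 1) * f \<xi> - 1/3 * \<xi> * f' \<xi> = f'' \<xi>"
     "f 0 = 0" "(f \<longlongrightarrow> 0) at_top" "\<forall>\<xi>>0. f \<xi> > 0"
     "\<forall>\<xi>\<ge>0. f \<xi> = \<xi> * exp (- (\<xi>^2) / 6)" by blast
  show ?thesis unfolding True
    by (rule exI[of _ f], rule exI[of _ f'], rule exI[of _ f'']) (use H in simp)
next
  case False
  then have gt: "1/3 < \<mu>" using assms(1) by simp
  from main_gt[OF gt assms(2)] obtain f f' f'' :: "real \<Rightarrow> real" where
    "(\<forall>\<xi>\<ge>0. (f has_real_derivative f' \<xi>) (at \<xi> within {0..}) \<and>
               (f' has_real_derivative f'' \<xi>) (at \<xi> within {0..}) \<and>
               (\<mu> - 1) * f \<xi> - \<mu> * \<xi> * f' \<xi> = f'' \<xi>) \<and>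
     f 0 = 0 \<and>
     (f \<longlongrightarrow> 0) at_top \<and>
     (\<forall>\<xi>>0. f \<xi> > 0) \<and>
     f \<in> O[at_top](\<lambda>\<xi>. \<xi> powr (1 - 1/\<mu>))" by blast
  then show ?thesis using False by blast
qed


end
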